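(* Let $m\ge2$, fix real numbers $r_1,\dots,r_m>0$ and integers $i_1,\dots,i_m\ge1$. If $D$ is divisible by $\gcd_j i_j$ and is sufficiently large, then there exist integers $d_1,\dots,d_m\ge1$ with $\gcd(d_1,\dots,d_m)=1$ and $D=d_1i_1+\dots+d_mi_m$ such that for each $\ell$, \[ \Big|d_\ell-\frac{r_\ell D}{i_1r_1+\dots+i_mr_m}\Big|\le (i_1+i_2)J(D)\,1_{\ell\in\{1,2\}}+\sum_{j=2}^m i_j. \]
   Context: $J(D)$ is Jacobsthal's function: the minimal integer such that every interval of this length contains an integer coprime to $D$. *)

theory Defs
  imports Complex_Main
begin

definition jacobsthal :: "nat \<Rightarrow> nat" where
  "jacobsthal D = (LEAST j. \<forall>a::int. \<exists>x\<in>{a+1..a + int j}. coprime x (int D))"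

end

theory Submission
  imports Defs "HOL-Computational_Algebra.Primes"
begin


definition cntP :: "int set \<Rightarrow> real \<Rightarrow> real \<Rightarrow> nat" where
  "cntP P a b = card {x::int. a < of_int x \<and> of_int x \<le> b \<and> (\<forall>p\<in>P. \<not> p dvd x)}"

lemma fl_lt: "(\<lfloor>a::real\<rfloor> + 1 \<le> x) \<longleftrightarrow> a < of_int x"
proof -
  have "\<lfloor>a\<rfloor> < x \<longleftrightarrow> a < of_int x" by (simp add: floor_less_iff)
  thus ?thesis by linarith
qed

lemma cnt_set_sub: "{x::int. (a::real) < of_int x \<and> of_int x \<le> b \<and> Q x} \<subseteq> {\<lfloor>a\<rfloor>+1..\<lfloor>b\<rfloor>}"
  by (auto simp: fl_lt le_floor_iff)

lemma cnt_base:
  assumes "a \<le> b"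
  shows "\<bar>real (card {x::int. a < of_int x \<and> of_int x \<le> b}) - (b - a)\<bar> \<le> 1"
proof -
  have "{x::int. a < of_int x \<and> of_int x \<le> b} = {\<lfloor>a\<rfloor>+1..\<lfloor>b\<rfloor>}"
    by (auto simp: fl_lt le_floor_iff)
  moreover have "\<lfloor>a\<rfloor> \<le> \<lfloor>b\<rfloor>" using assms floor_mono by blast
  ultimately have "real (card {x::int. a < of_int x \<and> of_int x \<le> b}) = of_int \<lfloor>b\<rfloor> - of_int \<lfloor>a\<rfloor>"
    by simp
  moreover have "of_int \<lfloor>a\<rfloor> \<le> a" "a < of_int \<lfloor>a\<rfloor> + 1" "of_int \<lfloor>b\<rfloor> \<le> b" "b < of_int \<lfloor>b\<rfloor> + 1"
    by linarith+
  ultimately show ?thesis by linarith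
qed

lemma cnt_bound:
  assumes "finite P" "\<forall>p\<in>P. prime p" "a \<le> b"
  shows "\<bar>real (cntP P a b) - (b - a) * (\<Prod>p\<in>P. 1 - 1 / of_int p)\<bar> \<le> 2 ^ card P"
  using assms
proof (induction P arbitrary: a b rule: finite_induct)
  case empty
  then show ?case using cnt_base[of a b] by (simp add: cntP_def)
next
  case (insert p P)
  define A where "A = {x::int. a < of_int x \<and> of_int x \<le> b \<and> (\<forall>q\<in>P. \<not> q dvd x)}"
  define B where "B = {x::int. a / of_int p < of_int x \<and> of_int x \<le> b / of_int p \<and> (\<forall>q\<in>P. \<not> q dvd x)}"
  define M where "M = {x\<in>A. p dvd x}"
  have pp: "prime p" using insert by auto
  have p0: "p > 0" using pp prime_gt_0_int by blast
  have p0r: "(of_int p::real) > 0" using p0 by simp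
  have finA: "finite A" unfolding A_def by (rule finite_subset[OF cnt_set_sub]) simp
  have MA: "M \<subseteq> A" unfolding M_def by auto
  have Ains: "{x::int. a < of_int x \<and> of_int x \<le> b \<and> (\<forall>q\<in>insert p P. \<not> q dvd x)} = A - M"
    unfolding A_def M_def by auto
  have key: "\<And>q k. q \<in> P \<Longrightarrow> q dvd p * k \<longleftrightarrow> q dvd k"
  proof -
    fix q k assume q: "q \<in> P"
    have qp: "prime q" using insert q by auto
    have "q \<noteq> p" using q insert by auto
    hence "\<not> q dvd p" using primes_dvd_imp_eq[OF qp pp] by auto
    thus "q dvd p * k \<longleftrightarrow> q dvd k" using prime_dvd_mult_iff[OF qp] by auto
  qed
  have MB: "M = (\<lambda>k. p * k) ` B"
  proof (intro equalityI subsetI)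
    fix x assume "x \<in> M"
    then obtain k where k: "x = p * k" and xA: "x \<in> A" unfolding M_def by auto
    have "a < of_int p * of_int k" "of_int p * of_int k \<le> b" using xA k unfolding A_def by auto
    hence "a / of_int p < of_int k" "of_int k \<le> b / of_int p" using p0r
      by (auto simp: field_simps)
    moreover have "\<forall>q\<in>P. \<not> q dvd k" using xA k key unfolding A_def by auto
    ultimately show "x \<in> (\<lambda>k. p * k) ` B" using k unfolding B_def by auto
  next
    fix x assume "x \<in> (\<lambda>k. p * k) ` B"
    then obtain k where k: "x = p * k" and kB: "k \<in> B" by auto
    have "a / of_int p < of_int k" "of_int k \<le> b / of_int p" using kB unfolding B_def by auto
    hence "a < of_int p * of_int k" "of_int p * of_int k \<le> b" using p0r
      by (auto simp: field_simps)
    moreover have "\<forall>q\<in>P. \<not> q dvd x" using kB k key unfolding B_def by auto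
    ultimately show "x \<in> M" using k unfolding M_def A_def by auto
  qed
  have "card M = card B" unfolding MB using p0 by (intro card_image) (auto simp: inj_on_def)
  hence cins: "real (cntP (insert p P) a b) = real (cntP P a b) - real (cntP P (a / of_int p) (b / of_int p))"
    unfolding cntP_def Ains using card_Diff_subset[OF finite_subset[OF MA finA] MA] card_mono[OF finA MA]
    by (simp add: A_def B_def of_nat_diff)
  have ab': "a / of_int p \<le> b / of_int p" using insert.prems p0r by (simp add: divide_right_mono)
  have IH1: "\<bar>real (cntP P a b) - (b - a) * (\<Prod>p\<in>P. 1 - 1 / of_int p)\<bar> \<le> 2 ^ card P"
    using insert by auto
  have IH2: "\<bar>real (cntP P (a / of_int p) (b / of_int p)) - (b / of_int p - a / of_int p) * (\<Prod>p\<in>P. 1 - 1 / of_int p)\<bar> \<le> 2 ^ card P"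
    using insert ab' by auto
  have prodins: "(\<Prod>q\<in>insert p P. 1 - 1 / (of_int q::real)) = (1 - 1 / of_int p) * (\<Prod>q\<in>P. 1 - 1 / of_int q)"
    using insert by simp
  have eq: "(b - a) * ((1 - 1 / of_int p) * (\<Prod>q\<in>P. 1 - 1 / (of_int q::real))) =
     (b - a) * (\<Prod>q\<in>P. 1 - 1 / of_int q) - (b / of_int p - a / of_int p) * (\<Prod>q\<in>P. 1 - 1 / of_int q)"
    by (simp add: algebra_simps diff_divide_distrib)
  have "card (insert p P) = card P + 1" using insert by simp
  thus ?case unfolding cins prodins eq using IH1 IH2 by simp
qed


lemma prod_primes_dvd:
  assumes "finite P" "\<forall>p\<in>P. prime p \<and> p dvd (n::int)"
  shows "(\<Prod>p\<in>P. p) dvd n"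
  using assms
proof (induction P rule: finite_induct)
  case empty thus ?case by simp
next
  case (insert p P)
  have "coprime p (\<Prod>q\<in>P. q)"
    by (rule prod_coprime_right) (use insert in \<open>auto intro: primes_coprime\<close>)
  thus ?case using insert by (simp add: divides_mult)
qed

lemma no_pf_coprime:
  assumes "D \<ge> (1::nat)" "\<forall>p\<in>prime_factors (int D). \<not> p dvd x"
  shows "coprime x (int D)"
proof (rule ccontr)
  assume nc: "\<not> coprime x (int D)"
  have "gcd x (int D) \<noteq> 0" using assms by simp
  moreover have "\<not> is_unit (gcd x (int D))" using nc by (simp add: coprime_iff_gcd_eq_1)
  ultimately obtain q where q: "q dvd gcd x (int D)" "prime q" using prime_divisor_exists by blast
  hence "q \<in> prime_factors (int D)" using assms by (simp add: in_prime_factors_iff)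
  thus False using q assms by auto
qed

lemma four_pow_bound:
  assumes "D \<ge> (1::nat)"
  shows "(4::real) ^ card (prime_factors (int D)) \<le> 4 ^ 16 * sqrt (real D)"
proof -
  define P where "P = prime_factors (int D)"
  define P1 where "P1 = {p\<in>P. p < 16}"
  define P2 where "P2 = {p\<in>P. \<not> p < 16}"
  have finP: "finite P" unfolding P_def by simp
  have P12: "P = P1 \<union> P2" "P1 \<inter> P2 = {}" unfolding P1_def P2_def by auto
  have fin12: "finite P1" "finite P2" using finP P12 by auto
  have cP: "card P = card P1 + card P2" using P12 fin12 card_Un_disjoint by metis
  have "P1 \<subseteq> {0..<16}" unfolding P1_def P_def
    by (auto simp: in_prime_factors_iff prime_gt_0_int less_imp_le)
  hence c1: "card P1 \<le> 16" using card_mono[of "{0::int..<16}" P1] by simp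
  have "(\<Prod>p\<in>P2. p) dvd (\<Prod>p\<in>P. p)" using finP P12 by (intro prod_dvd_prod_subset) auto
  moreover have "(\<Prod>p\<in>P. p) dvd int D" using finP unfolding P_def
    by (intro prod_primes_dvd) (auto simp: in_prime_factors_iff)
  ultimately have "(\<Prod>p\<in>P2. p) dvd int D" by (rule dvd_trans)
  hence le1: "(\<Prod>p\<in>P2. p) \<le> int D" using assms by (intro zdvd_imp_le) auto
  have "(\<Prod>p\<in>P2. (16::int)) \<le> (\<Prod>p\<in>P2. p)" by (rule prod_mono) (auto simp: P2_def)
  hence "(16::int) ^ card P2 \<le> int D" using le1 by (metis order_trans prod_constant)
  hence "int (16 ^ card P2) \<le> int D" by simp
  hence "16 ^ card P2 \<le> D" by (simp only: of_nat_le_iff)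
  hence "(16::real) ^ card P2 \<le> real D" by (metis of_nat_le_iff of_nat_numeral of_nat_power)
  moreover have "((4::real) ^ card P2)\<^sup>2 = 16 ^ card P2"
    by (simp add: power2_eq_square power_mult_distrib[symmetric])
  ultimately have "((4::real) ^ card P2)\<^sup>2 \<le> real D" by simp
  hence s: "(4::real) ^ card P2 \<le> sqrt (real D)" by (rule real_le_rsqrt)
  have "(4::real) ^ card P = 4 ^ card P1 * 4 ^ card P2" by (simp add: cP power_add)
  also have "\<dots> \<le> 4 ^ 16 * sqrt (real D)"
    by (rule mult_mono) (use power_increasing[OF c1, of "4::real"] s in auto)
  finally show ?thesis unfolding P_def .
qed

lemma jac_prop_N:
  assumes "D \<ge> (1::nat)"
  shows "\<forall>a::int. \<exists>x\<in>{a+1..a + int (4 ^ card (prime_factors (int D)) + 1)}. coprime x (int D)"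
proof
  fix a :: int
  define P where "P = prime_factors (int D)"
  define k where "k = card P"
  define N where "N = (4::nat) ^ k + 1"
  have finP: "finite P" unfolding P_def by simp
  have prP: "\<forall>p\<in>P. prime p" unfolding P_def by (auto simp: in_prime_factors_iff)
  have b: "\<bar>real (cntP P (of_int a) (of_int a + real N)) - real N * (\<Prod>p\<in>P. 1 - 1 / of_int p)\<bar> \<le> 2 ^ k"
    using cnt_bound[OF finP prP, of "of_int a" "of_int a + real N"] unfolding k_def by simp
  have "(\<Prod>p\<in>P. (1/2::real)) \<le> (\<Prod>p\<in>P. 1 - 1 / of_int p)"
  proof (rule prod_mono)
    fix p assume "p \<in> P"
    hence "p \<ge> 2" using prP prime_ge_2_int by blast
    hence "(of_int p::real) \<ge> 2" by simp
    hence "1 / (of_int p::real) \<le> 1/2" by (simp add: field_simps)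
    thus "0 \<le> (1/2::real) \<and> 1/2 \<le> 1 - 1 / (of_int p::real)" by simp
  qed
  hence pr: "(1/2::real) ^ k \<le> (\<Prod>p\<in>P. 1 - 1 / of_int p)" unfolding k_def by simp
  have rN: "real N = 4^k + 1" unfolding N_def by simp
  have "(4::real)^k * (1/2)^k = 2^k" by (simp add: power_mult_distrib[symmetric])
  hence "real N * (1/2) ^ k = 2 ^ k + (1/2)^k" unfolding rN by (simp add: distrib_right)
  moreover have "real N * (1/2) ^ k \<le> real N * (\<Prod>p\<in>P. 1 - 1 / of_int p)"
    using pr by (intro mult_left_mono) auto
  moreover have "(0::real) < (1/2)^k" by simp
  ultimately have "real (cntP P (of_int a) (of_int a + real N)) > 0" using b by linarith
  hence "{x::int. of_int a < (of_int x::real) \<and> of_int x \<le> of_int a + real N \<and> (\<forall>p\<in>P. \<not> p dvd x)} \<noteq> {}"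
    unfolding cntP_def by (metis card.empty of_nat_0 less_irrefl)
  then obtain x::int where x: "of_int a < (of_int x::real)" "of_int x \<le> of_int a + real N" "\<forall>p\<in>P. \<not> p dvd x"
    by blast
  have "x \<in> {a+1..a + int N}" using x(1,2) by simp
  moreover have "coprime x (int D)" using no_pf_coprime[OF assms] x(3) unfolding P_def by auto
  moreover have "int N = int (4 ^ card (prime_factors (int D)) + 1)" by (simp add: N_def k_def P_def)
  ultimately show "\<exists>x\<in>{a+1..a + int (4 ^ card (prime_factors (int D)) + 1)}. coprime x (int D)"
    by metis
qed

lemma jac_bound:
  assumes "D \<ge> (1::nat)"
  shows "real (jacobsthal D) \<le> 4 ^ 16 * sqrt (real D) + 1"
    and "\<forall>a::int. \<exists>x\<in>{a+1..a + int (jacobsthal D)}. coprime x (int D)"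
proof -
  have "jacobsthal D \<le> 4 ^ card (prime_factors (int D)) + 1"
    unfolding jacobsthal_def by (rule Least_le) (rule jac_prop_N[OF assms])
  hence "real (jacobsthal D) \<le> real (4 ^ card (prime_factors (int D)) + 1)" by (simp only: of_nat_le_iff)
  hence "real (jacobsthal D) \<le> 4 ^ card (prime_factors (int D)) + 1" by simp
  thus "real (jacobsthal D) \<le> 4 ^ 16 * sqrt (real D) + 1" using four_pow_bound[OF assms] by linarith
  show "\<forall>a::int. \<exists>x\<in>{a+1..a + int (jacobsthal D)}. coprime x (int D)"
    unfolding jacobsthal_def by (rule LeastI) (rule jac_prop_N[OF assms])
qed



lemma sum_split12:
  fixes f :: "nat \<Rightarrow> 'a::comm_monoid_add"
  assumes "m \<ge> 2"
  shows "(\<Sum>l=1..m. f l) = f 1 + f 2 + (\<Sum>l=3..m. f l)"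
proof -
  have "{1..m} = insert 1 (insert 2 {3..m})" using assms by auto
  thus ?thesis by (simp add: add.assoc)
qed

lemma gcd_lincomb:
  fixes i :: "nat \<Rightarrow> nat"
  assumes "finite F"
  shows "\<exists>c::nat\<Rightarrow>int. int (Gcd (i ` F)) = (\<Sum>l\<in>F. c l * int (i l))"
  using assms
proof (induction F rule: finite_induct)
  case empty
  show ?case by simp
next
  case (insert x F)
  then obtain c where c: "int (Gcd (i ` F)) = (\<Sum>l\<in>F. c l * int (i l))" by blast
  obtain u v where uv: "u * int (i x) + v * int (Gcd (i ` F)) = gcd (int (i x)) (int (Gcd (i ` F)))"
    using bezout_int by blast
  define c' where "c' = (\<lambda>l. if l = x then u else v * c l)"
  have "(\<Sum>l\<in>F. c' l * int (i l)) = v * (\<Sum>l\<in>F. c l * int (i l))"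
    unfolding c'_def using insert by (auto simp: sum_distrib_left mult.assoc intro!: sum.cong)
  hence "(\<Sum>l\<in>insert x F. c' l * int (i l)) = u * int (i x) + v * int (Gcd (i ` F))"
    using insert c by (simp add: c'_def)
  also have "\<dots> = int (Gcd (i ` insert x F))" using uv by simp
  finally show ?case by metis
qed


theorem lemma3p2:
  fixes m :: nat and r :: "nat \<Rightarrow> real" and i :: "nat \<Rightarrow> nat"
  assumes "m \<ge> 2"
    and "\<forall>j\<in>{1..m}. r j > 0"
    and "\<forall>j\<in>{1..m}. i j \<ge> 1"
  shows "\<exists>D0::nat. \<forall>D\<ge>D0. Gcd (i ` {1..m}) dvd D \<longrightarrow>
           (\<exists>d :: nat \<Rightarrow> nat.
              (\<forall>l\<in>{1..m}. d l \<ge> 1) \<and>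
              Gcd (d ` {1..m}) = 1 \<and>
              D = (\<Sum>l=1..m. d l * i l) \<and>
              (\<forall>l\<in>{1..m}.
                 \<bar>real (d l) - r l * real D / (\<Sum>j=1..m. real (i j) * r j)\<bar>
                   \<le> (if l \<in> {1,2} then real ((i 1 + i 2) * jacobsthal D) else 0)
                      + real (\<Sum>j=2..m. i j)))"
proof -
  note m2 = assms(1)
  have rpos: "\<And>j. j \<in> {1..m} \<Longrightarrow> r j > 0" using assms(2) by auto
  have ipos: "\<And>j. j \<in> {1..m} \<Longrightarrow> i j \<ge> 1" using assms(3) by auto
  have i1: "i 1 \<ge> 1" and i2: "i 2 \<ge> 1" using ipos m2 by auto
  define Sg where "Sg = (\<Sum>j=1..m. real (i j) * r j)"
  have Sgpos: "Sg > 0" unfolding Sg_def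
  proof (rule sum_pos)
    show "finite {1..m}" by simp
    show "{1..m} \<noteq> {}" using m2 by auto
    fix j assume "j \<in> {1..m}"
    thus "0 < real (i j) * r j" using rpos ipos by (simp add: Suc_le_eq)
  qed
  define S2 where "S2 = (\<Sum>j=2..m. i j)"
  define C where "C = real (i 1 + i 2) * (4 ^ 16 + 1) + real S2 + 1"
  define D0 where "D0 = Max ((\<lambda>l. nat \<lceil>(C * Sg / r l)\<^sup>2\<rceil>) ` {1..m}) + 1"
  have S2ge: "S2 = i 2 + (\<Sum>j=3..m. i j)"
  proof -
    have "{2..m} = insert 2 {3..m}" using m2 by auto
    thus ?thesis unfolding S2_def by simp
  qed
  obtain c :: "nat \<Rightarrow> int" where c: "int (Gcd (i ` {1..m})) = (\<Sum>l=1..m. c l * int (i l))"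
    using gcd_lincomb[of "{1..m}" i] by auto
  define g1 where "g1 = gcd (int (i 1)) (int (i 2))"
  define a where "a = int (i 1) div g1"
  define b where "b = int (i 2) div g1"
  have g1pos: "g1 > 0" unfolding g1_def using i1 by simp
  have ia: "int (i 1) = a * g1" unfolding a_def g1_def by simp
  have ib: "int (i 2) = b * g1" unfolding b_def g1_def by simp
  have bpos: "b \<ge> 1" using ib i2 g1pos
    by (metis int_one_le_iff_zero_less less_le_trans linorder_not_le mult_nonpos_nonneg of_nat_0_less_iff order.strict_implies_order zero_less_one)
  have ble: "b \<le> int (i 2)" using ib g1pos bpos by (simp add: mult_le_cancel_left1) 
  have cop: "coprime b a" unfolding a_def b_def g1_def using i1
    by (metis div_gcd_coprime gcd.commute coprime_commute of_nat_eq_0_iff not_one_le_zero)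
  obtain u v where uv: "u * b + v * a = 1"
    using bezout_int[of b a] cop by (auto simp: coprime_iff_gcd_eq_1)
  have ab: "b * int (i 1) = a * int (i 2)" using ia ib by simp
  show ?thesis
  proof (intro exI[of _ D0] allI impI)
    fix D assume DD0: "D \<ge> D0" and gD: "Gcd (i ` {1..m}) dvd D"
    have D1: "D \<ge> 1" using DD0 unfolding D0_def by simp
    define J where "J = jacobsthal D"
    have Jb: "real J \<le> 4 ^ 16 * sqrt (real D) + 1" using jac_bound(1)[OF D1] unfolding J_def .
    have Jp: "\<forall>a::int. \<exists>x\<in>{a+1..a + int J}. coprime x (int D)" using jac_bound(2)[OF D1] unfolding J_def .
    define x where "x = (\<lambda>l. r l * real D / Sg)"
    obtain q where q: "D = Gcd (i ` {1..m}) * q" using gD by auto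
    define y where "y = (\<lambda>l. int q * c l)"
    have ysum: "(\<Sum>l=1..m. y l * int (i l)) = int D"
    proof -
      have "(\<Sum>l=1..m. y l * int (i l)) = int q * (\<Sum>l=1..m. c l * int (i l))"
        unfolding y_def by (simp add: sum_distrib_left mult.assoc)
      thus ?thesis using c q by simp
    qed
    define k where "k = (\<lambda>l. \<lfloor>(x l - of_int (y l)) / real (i 2)\<rfloor>)"
    define E where "E = y 2 - (\<Sum>l=3..m. k l * int (i l))"
    define t0 where "t0 = \<lceil>(x 1 - of_int (y 1)) / of_int b\<rceil>"
    obtain z where z: "z \<in> {(u * y 1 - v * E + t0 - 1) + 1 .. (u * y 1 - v * E + t0 - 1) + int J}"
      and zc: "coprime z (int D)" using Jp by blast
    define t where "t = z - (u * y 1 - v * E)"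
    have tr: "t0 \<le> t" "t \<le> t0 + int J - 1" using z unfolding t_def by auto
    define e where "e = (\<lambda>l. if l = 1 then y 1 + t * b else if l = 2 then E - t * a else y l + k l * int (i 2))"
    have e1: "e 1 = y 1 + t * b" and e2: "e 2 = E - t * a" unfolding e_def by auto
    have e3: "\<And>l. l \<in> {3..m} \<Longrightarrow> e l = y l + k l * int (i 2)" unfolding e_def by auto
    have esum: "(\<Sum>l=1..m. e l * int (i l)) = int D"
    proof -
      have "(\<Sum>l=3..m. e l * int (i l)) = (\<Sum>l=3..m. y l * int (i l)) + int (i 2) * (\<Sum>l=3..m. k l * int (i l))"
      proof -
        have "(\<Sum>l=3..m. e l * int (i l)) = (\<Sum>l=3..m. y l * int (i l) + int (i 2) * (k l * int (i l)))"
          by (rule sum.cong) (auto simp: e3 algebra_simps)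
        thus ?thesis by (simp add: sum.distrib sum_distrib_left)
      qed
      moreover have "e 1 * int (i 1) + e 2 * int (i 2) = y 1 * int (i 1) + E * int (i 2)"
        unfolding e1 e2 using ab by (simp add: algebra_simps)
      ultimately have "(\<Sum>l=1..m. e l * int (i l)) = y 1 * int (i 1) + y 2 * int (i 2) + (\<Sum>l=3..m. y l * int (i l))"
        unfolding sum_split12[OF m2, of "\<lambda>l. e l * int (i l)"] E_def by (simp add: algebra_simps)
      also have "\<dots> = int D" using ysum sum_split12[OF m2, of "\<lambda>l. y l * int (i l)"] by simp
      finally show ?thesis .
    qed
    have xsum: "(\<Sum>l=1..m. x l * real (i l)) = real D"
    proof -
      have "(\<Sum>l=1..m. x l * real (i l)) = (\<Sum>l=1..m. real D / Sg * (real (i l) * r l))"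
        by (rule sum.cong) (auto simp: x_def)
      also have "\<dots> = real D / Sg * Sg" unfolding Sg_def by (simp add: sum_distrib_left)
      finally have "(\<Sum>l=1..m. x l * real (i l)) = real D / Sg * Sg" .
      thus ?thesis using Sgpos by simp
    qed
    have b3: "\<bar>real_of_int (e l) - x l\<bar> \<le> real (i 2)" if l: "l \<in> {3..m}" for l
    proof -
      have i2r: "real (i 2) > 0" using i2 by simp
      have "of_int (k l) \<le> (x l - of_int (y l)) / real (i 2)" "(x l - of_int (y l)) / real (i 2) < of_int (k l) + 1"
        unfolding k_def by linarith+
      hence "of_int (k l) * real (i 2) \<le> x l - of_int (y l)" "x l - of_int (y l) < (of_int (k l) + 1) * real (i 2)"
        using i2r by (simp_all add: field_simps)
      thus ?thesis using e3[OF l] by (simp add: algebra_simps)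
    qed
    have b1: "\<bar>real_of_int (e 1) - x 1\<bar> \<le> real (i 2) * real J"
    proof -
      have br: "real_of_int b \<ge> 1" using bpos by simp
      have "(x 1 - of_int (y 1)) / of_int b \<le> of_int t0" "of_int t0 < (x 1 - of_int (y 1)) / of_int b + 1"
        unfolding t0_def by linarith+
      hence A: "x 1 - of_int (y 1) \<le> of_int t0 * of_int b" "of_int t0 * of_int b < x 1 - of_int (y 1) + of_int b"
        using br by (simp_all add: field_simps)
      have "of_int t0 \<le> (of_int t::real)" "of_int t \<le> (of_int t0 + real J - 1::real)" using tr by linarith+
      hence M1: "of_int t0 * of_int b \<le> (of_int t::real) * of_int b" and M2: "of_int t * of_int b \<le> (of_int t0 + real J - 1::real) * of_int b"
        using br by (auto intro: mult_right_mono)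
      have "(of_int t0 + real J - 1::real) * of_int b = of_int t0 * of_int b + of_int b * real J - of_int b"
        by (simp add: algebra_simps)
      moreover have "real_of_int (e 1) = of_int (y 1) + of_int t * of_int b" unfolding e1 by simp
      ultimately have "0 \<le> real_of_int (e 1) - x 1" "real_of_int (e 1) - x 1 \<le> of_int b * real J"
        using A M1 M2 by linarith+
      moreover have "of_int b * real J \<le> real (i 2) * real J" using ble by (intro mult_right_mono) auto
      ultimately show ?thesis by simp
    qed
    have b2: "\<bar>real_of_int (e 2) - x 2\<bar> \<le> real (i 1) * real J + (\<Sum>j=3..m. real (i j))"
    proof -
      have "(\<Sum>l=1..m. real_of_int (e l) * real (i l)) = real_of_int (\<Sum>l=1..m. e l * int (i l))"
        by simp
      moreover have "real_of_int (\<Sum>l=1..m. e l * int (i l)) = real D"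
        using esum by simp
      ultimately have "(\<Sum>l=1..m. real_of_int (e l) * real (i l)) = real D"
        by (rule trans)
      hence "(\<Sum>l=1..m. (real_of_int (e l) - x l) * real (i l)) = 0"
        using xsum by (simp add: left_diff_distrib sum_subtractf)
      hence eq: "(real_of_int (e 2) - x 2) * real (i 2) = - ((real_of_int (e 1) - x 1) * real (i 1)) - (\<Sum>l=3..m. (real_of_int (e l) - x l) * real (i l))"
        unfolding sum_split12[OF m2] by linarith
      have "\<bar>\<Sum>l=3..m. (real_of_int (e l) - x l) * real (i l)\<bar> \<le> (\<Sum>l=3..m. \<bar>(real_of_int (e l) - x l) * real (i l)\<bar>)"
        by (rule sum_abs)
      also have "\<dots> \<le> (\<Sum>l=3..m. real (i 2) * real (i l))"
        by (rule sum_mono) (use b3 in \<open>auto simp: abs_mult intro: mult_right_mono\<close>)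
      finally have s3: "\<bar>\<Sum>l=3..m. (real_of_int (e l) - x l) * real (i l)\<bar> \<le> real (i 2) * (\<Sum>j=3..m. real (i j))"
        by (simp add: sum_distrib_left)
      have s1: "\<bar>(real_of_int (e 1) - x 1) * real (i 1)\<bar> \<le> real (i 2) * real J * real (i 1)"
        using b1 by (simp add: abs_mult mult_right_mono)
      have "\<bar>(real_of_int (e 2) - x 2) * real (i 2)\<bar> \<le> real (i 2) * real J * real (i 1) + real (i 2) * (\<Sum>j=3..m. real (i j))"
        using eq s1 s3 by linarith
      moreover have "\<bar>(real_of_int (e 2) - x 2) * real (i 2)\<bar> = \<bar>real_of_int (e 2) - x 2\<bar> * real (i 2)"
        by (simp only: abs_mult abs_of_nat)
      moreover have "real (i 2) * real J * real (i 1) + real (i 2) * (\<Sum>j=3..m. real (i j)) = real (i 2) * (real (i 1) * real J + (\<Sum>j=3..m. real (i j)))"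
        by (simp add: algebra_simps)
      ultimately have "\<bar>real_of_int (e 2) - x 2\<bar> * real (i 2) \<le> real (i 2) * (real (i 1) * real J + (\<Sum>j=3..m. real (i j)))"
        by linarith
      thus ?thesis using i2 by (simp add: mult.commute)
    qed
    define B where "B = real ((i 1 + i 2) * J) + real S2"
    have S2r: "real S2 = real (i 2) + (\<Sum>j=3..m. real (i j))" using S2ge by simp
    have ball: "\<bar>real_of_int (e l) - x l\<bar> \<le> (if l \<in> {1,2} then real ((i 1 + i 2) * J) else 0) + real S2"
      if l: "l \<in> {1..m}" for l
    proof -
      have s3nn: "(\<Sum>j=3..m. real (i j)) \<ge> 0" by (simp add: sum_nonneg)
      have nn: "real J * real (i 1) \<ge> 0" "real J * real (i 2) \<ge> 0" by auto
      consider "l = 1" | "l = 2" | "l \<in> {3..m}" using l by fastforce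
      thus ?thesis
      proof cases
        case 1
        have G: "(if l \<in> {1,2} then real ((i 1 + i 2) * J) else 0) + real S2 = real J * real (i 1) + real J * real (i 2) + real S2"
          using 1 by (simp add: algebra_simps)
        have "\<bar>real_of_int (e l) - x l\<bar> \<le> real J * real (i 2)" using b1 1 by (simp add: mult.commute)
        thus ?thesis unfolding G using S2r s3nn nn by linarith
      next
        case 2
        have G: "(if l \<in> {1,2} then real ((i 1 + i 2) * J) else 0) + real S2 = real J * real (i 1) + real J * real (i 2) + real S2"
          using 2 by (simp add: algebra_simps)
        have "\<bar>real_of_int (e l) - x l\<bar> \<le> real J * real (i 1) + (\<Sum>j=3..m. real (i j))" using b2 2 by (simp add: mult.commute)
        thus ?thesis unfolding G using S2r s3nn nn by linarith
      next
        case 3 thus ?thesis using b3[OF 3] S2r s3nn by auto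
      qed
    qed
    have epos: "e l \<ge> 1" if l: "l \<in> {1..m}" for l
    proof -
      define sq where "sq = sqrt (real D)"
      have sD: "sq \<ge> 1" using D1 unfolding sq_def by simp
      have k1: "4 ^ 16 * sq + 1 \<le> (4 ^ 16 + 1) * sq" using sD by (simp add: distrib_right)
      have "real ((i 1 + i 2) * J) = real (i 1 + i 2) * real J" by simp
      also have "\<dots> \<le> real (i 1 + i 2) * (4 ^ 16 * sq + 1)" using Jb unfolding sq_def by (intro mult_left_mono) auto
      also have "\<dots> \<le> real (i 1 + i 2) * ((4 ^ 16 + 1) * sq)" using k1 by (intro mult_left_mono) auto
      finally have h1: "real ((i 1 + i 2) * J) \<le> real (i 1 + i 2) * ((4 ^ 16 + 1) * sq)" .
      have h2: "real S2 * 1 \<le> real S2 * sq" using sD by (intro mult_left_mono) auto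
      have h3: "C * sq = real (i 1 + i 2) * ((4 ^ 16 + 1) * sq) + real S2 * sq + sq"
        unfolding C_def by (simp add: algebra_simps)
      have BC: "B + 1 \<le> C * sq" unfolding B_def using h1 h2 h3 sD by linarith
      have rl: "r l > 0" using rpos l by auto
      have "nat \<lceil>(C * Sg / r l)\<^sup>2\<rceil> \<le> Max ((\<lambda>l. nat \<lceil>(C * Sg / r l)\<^sup>2\<rceil>) ` {1..m})"
        using l by (intro Max_ge) auto
      hence "nat \<lceil>(C * Sg / r l)\<^sup>2\<rceil> \<le> D" using DD0 unfolding D0_def by simp
      hence "(C * Sg / r l)\<^sup>2 \<le> real D" by linarith
      hence "C * Sg / r l \<le> sqrt (real D)" by (rule real_le_rsqrt)
      hence "C * Sg \<le> r l * sqrt (real D)" using rl by (simp add: field_simps)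
      hence "(C * Sg) * sq \<le> (r l * sqrt (real D)) * sq"
        using sD by (intro mult_right_mono) auto
      moreover have "(r l * sqrt (real D)) * sq = r l * real D" unfolding sq_def using D1 by (simp add: mult.assoc)
      moreover have "(C * Sg) * sq = (C * sq) * Sg" by (simp add: ac_simps)
      ultimately have "(C * sq) * Sg \<le> r l * real D" by simp
      hence "C * sq \<le> x l" unfolding x_def using Sgpos by (simp add: field_simps)
      hence "B + 1 \<le> x l" using BC by linarith
      moreover have "(if l \<in> {1,2} then real ((i 1 + i 2) * J) else 0) \<le> real ((i 1 + i 2) * J)" by simp
      hence "\<bar>real_of_int (e l) - x l\<bar> \<le> B" using ball[OF l] unfolding B_def by linarith
      ultimately have "real_of_int (e l) \<ge> 1" by linarith
      thus ?thesis by linarith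
    qed
    define d where "d = (\<lambda>l. nat (e l))"
    have de: "\<And>l. l \<in> {1..m} \<Longrightarrow> int (d l) = e l" unfolding d_def using epos by fastforce
    have dsum: "D = (\<Sum>l=1..m. d l * i l)"
    proof -
      have "int (\<Sum>l=1..m. d l * i l) = (\<Sum>l=1..m. e l * int (i l))"
        by (simp add: de)
      thus ?thesis using esum by linarith
    qed
    have dgcd: "Gcd (d ` {1..m}) = 1"
    proof -
      define G where "G = Gcd (d ` {1..m})"
      have Gd: "\<And>l. l \<in> {1..m} \<Longrightarrow> G dvd d l" unfolding G_def by simp
      have "G dvd D" unfolding dsum using Gd by (intro dvd_sum) auto
      hence GD: "int G dvd int D" by simp
      have m12: "1 \<in> {1..m}" "2 \<in> {1..m}" using m2 by auto
      have "int G dvd e 1" using Gd[OF m12(1)] de[OF m12(1)] by (metis int_dvd_int_iff)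
      moreover have "int G dvd e 2" using Gd[OF m12(2)] de[OF m12(2)] by (metis int_dvd_int_iff)
      ultimately have "int G dvd u * e 1 - v * e 2" by simp
      moreover have "u * e 1 - v * e 2 = z"
      proof -
        have "u * e 1 - v * e 2 = u * y 1 - v * E + t * (u * b + v * a)" unfolding e1 e2 by (simp add: algebra_simps)
        thus ?thesis using uv unfolding t_def by simp
      qed
      ultimately have "int G dvd z" by simp
      hence "is_unit (int G)" using GD zc coprime_common_divisor by blast
      thus ?thesis unfolding G_def by simp
    qed
    show "\<exists>d :: nat \<Rightarrow> nat.
              (\<forall>l\<in>{1..m}. d l \<ge> 1) \<and>
              Gcd (d ` {1..m}) = 1 \<and>
              D = (\<Sum>l=1..m. d l * i l) \<and>
              (\<forall>l\<in>{1..m}.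
                 \<bar>real (d l) - r l * real D / (\<Sum>j=1..m. real (i j) * r j)\<bar>
                   \<le> (if l \<in> {1,2} then real ((i 1 + i 2) * jacobsthal D) else 0)
                      + real (\<Sum>j=2..m. i j))"
    proof (intro exI[of _ d] conjI ballI)
      fix l assume l: "l \<in> {1..m}"
      show "d l \<ge> 1" using de[OF l] epos[OF l] by linarith
    next
      show "Gcd (d ` {1..m}) = 1" by (rule dgcd)
    next
      show "D = (\<Sum>l=1..m. d l * i l)" by (rule dsum)
    next
      fix l assume l: "l \<in> {1..m}"
      have "real (d l) = real_of_int (e l)" using de[OF l] by (metis of_int_of_nat_eq)
      thus "\<bar>real (d l) - r l * real D / (\<Sum>j=1..m. real (i j) * r j)\<bar>
                   \<le> (if l \<in> {1,2} then real ((i 1 + i 2) * jacobsthal D) else 0)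
                      + real (\<Sum>j=2..m. i j)"
        using ball[OF l] unfolding x_def Sg_def J_def S2_def by simp
    qed
  qed
qed


end
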